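(* Assume $0\le l(\xi)\le C_l$ for all $\xi\in\Xi$. Run the SMC scheme described in the context with the exact loss $l$, starting from $m$ independent samples of $\rho_0$ with weights $1/m$. Then for every $t$ with $0\le t\le N-1$, $$h(\rho^E_{t+1},\rho_{t+1})\le\frac{1}{\sqrt{m}}\sum_{s=0}^{t+1}6^{\,t+1-s}\exp\big((W_{t+1}-W_s)C_l\big).$$ In particular, the final SMC approximation $\rho^E:=\rho^E_N$ of the Gibbs posterior $\rho=\rho_N$ satisfies $$h(\rho^E,\rho)\le\frac{1}{\sqrt m}\sum_{s=0}^N6^{N-s}\exp\big((W-W_s)C_l\big).$$
   Context: $\Xi\subseteq\mathbb{R}^M$ and $\rho_0$ is a prior probability distribution on $\Xi$. $l:\Xi\to\mathbb{R}$ is a loss function and $W>0$. For a probability measure $\mu$, $G_V\mu(d\xi)=\exp(-Vl(\xi))\mu(d\xi)/\int\exp(-Vl)\,d\mu$. Fix deterministic weights $0=W_0<W_1<\dots<W_N=W$ and set $\rho_t=G_{W_t}\rho_0$; thus $\rho=\rho_N$ is the Gibbs posterior. For each $t$, $\mathcal{K}_{t+1}$ is a Markov kernel on $\Xi$ leaving $\rho_{t+1}$ invariant. SMC scheme. Start with $\rho_0^E=\frac1m\sum_i\delta_{\xi_i^0}$, where $\xi_i^0$ are i.i.d. from $\rho_0$. Given $\rho_t^E=\sum_i w_i^t\delta_{\xi_i^t}$, iteration $t+1$ consists of three steps. (i) Reweight: $w_i^{t+1}\propto\exp(-(W_{t+1}-W_t)l(\xi_i^t))w_i^t$, normalized to sum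 to 1. This gives $\rho^E_{t+1,t}=\sum_iw_i^{t+1}\delta_{\xi_i^t}=G_{W_{t+1}-W_t}\rho_t^E$. (ii) Resample: draw $m$ particles $\xi_i^{t+1,t}$ conditionally i.i.d. from $\rho^E_{t+1,t}$, each with weight $1/m$. (iii) Mutate: move each resampled particle independently by $\mathcal{K}_{t+1}$, giving particles $\xi_i^{t+1}$ and $\rho^E_{t+1}=\frac1m\sum_i\delta_{\xi_i^{t+1}}$. For a probability measure $\mu$ and a bounded $f$, $\mu[f]=\int f\,d\mu$. For two possibly random probability measures $\rho_1,\rho_2$, $h(\rho_1,\rho_2)=\sup_f\sqrt{\mathbb{E}|\rho_1[f]-\rho_2[f]|^2}$. The supremum is over measurable $f$ with $\sup|f|\le1$, and the expectation is over all randomness of the algorithm. *)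

theory Defs
  imports "HOL-Probability.Probability"
begin

definition gibbs :: "('a \<Rightarrow> real) \<Rightarrow> real \<Rightarrow> 'a measure \<Rightarrow> 'a measure" where
  "gibbs l V \<mu> = density \<mu> (\<lambda>x. ennreal (exp (- V * l x) / (\<integral>y. exp (- V * l y) \<partial>\<mu>)))"

definition emp_mean :: "nat \<Rightarrow> ('a \<Rightarrow> real) \<Rightarrow> (nat \<Rightarrow> 'a) \<Rightarrow> real" where
  "emp_mean m f x = (\<Sum>i<m. f (x i)) / real m"

definition smc_weight :: "nat \<Rightarrow> ('a \<Rightarrow> real) \<Rightarrow> (nat \<Rightarrow> real) \<Rightarrow> nat \<Rightarrow> (nat \<Rightarrow> 'a) \<Rightarrow> nat \<Rightarrow> real" where
  "smc_weight m l W t x j =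
     exp (- (W (Suc t) - W t) * l (x j)) / (\<Sum>k<m. exp (- (W (Suc t) - W t) * l (x k)))"

text \<open>One SMC iteration t -> t+1 on the particle vector x:
  (ii) resample m indices J_i conditionally i.i.d. with probabilities smc_weight (after the
  reweighting step (i)), (iii) mutate each resampled particle x (J i) independently by K (t+1).\<close>
definition smc_step :: "'a measure \<Rightarrow> nat \<Rightarrow> ('a \<Rightarrow> real) \<Rightarrow> (nat \<Rightarrow> real) \<Rightarrow> (nat \<Rightarrow> 'a \<Rightarrow> 'a measure)
     \<Rightarrow> nat \<Rightarrow> (nat \<Rightarrow> 'a) \<Rightarrow> (nat \<Rightarrow> 'a) measure" where
  "smc_step S m l W K t x =
     (PiM {..<m} (\<lambda>_. point_measure {..<m} (\<lambda>j. ennreal (smc_weight m l W t x j))))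
       \<bind> (\<lambda>J. PiM {..<m} (\<lambda>i. K (Suc t) (x (J i))))"

primrec smc_law :: "'a measure \<Rightarrow> nat \<Rightarrow> ('a \<Rightarrow> real) \<Rightarrow> (nat \<Rightarrow> real) \<Rightarrow> (nat \<Rightarrow> 'a \<Rightarrow> 'a measure)
     \<Rightarrow> 'a measure \<Rightarrow> nat \<Rightarrow> (nat \<Rightarrow> 'a) measure" where
  "smc_law S m l W K \<rho>0 0 = PiM {..<m} (\<lambda>_. \<rho>0)"
| "smc_law S m l W K \<rho>0 (Suc t) = smc_law S m l W K \<rho>0 t \<bind> smc_step S m l W K t"

text \<open>h(rho^E, rho) where rho^E is the (random) equally weighted empirical measure of a particle
  vector with law P: sup over measurable f with sup |f| <= 1 of sqrt(E |rho^E[f] - rho[f]|^2).\<close>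
definition smc_h :: "'a measure \<Rightarrow> nat \<Rightarrow> (nat \<Rightarrow> 'a) measure \<Rightarrow> 'a measure \<Rightarrow> real" where
  "smc_h S m P \<rho> = (SUP f \<in> {f \<in> borel_measurable S. \<forall>x\<in>space S. \<bar>f x\<bar> \<le> 1}.
       sqrt (\<integral>x. (emp_mean m f x - (\<integral>y. f y \<partial>\<rho>))\<^sup>2 \<partial>P))"

end

theory Submission
  imports Defs
begin



lemma fin_int:
  fixes f :: "'a \<Rightarrow> real"
  assumes "finite_measure M" "f \<in> borel_measurable M" "\<And>x. x \<in> space M \<Longrightarrow> \<bar>f x\<bar> \<le> B"
  shows "integrable M f"
  using assms by (intro finite_measure.integrable_const_bound[where B=B]) (auto intro!: AE_I2)

lemma prod_two:
  fixes u v :: real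
  assumes "finite A" "i \<in> A" "k \<in> A" "i \<noteq> k"
  shows "(\<Prod>l\<in>A. (if l = i then u else if l = k then v else 1)) = u * v"
proof -
  have "(\<Prod>l\<in>A. (if l = i then u else if l = k then v else 1)) =
        (if i \<in> A then u else 1) * (\<Prod>l\<in>A - {i}. (if l = k then v else 1))"
    using assms by (subst prod.remove[of _ i]) (auto intro!: prod.cong)
  also have "(\<Prod>l\<in>A - {i}. (if l = k then v else 1)) = v"
    using assms by (subst prod.delta) auto
  finally show ?thesis using assms by simp
qed

lemma pim_var0:
  fixes M :: "nat \<Rightarrow> 'a measure" and f :: "nat \<Rightarrow> 'a \<Rightarrow> real"
  assumes m: "0 < m" and Mp: "\<And>i. prob_space (M i)"
    and fm: "\<And>i. f i \<in> borel_measurable (M i)"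
    and fb: "\<And>i x. i < m \<Longrightarrow> x \<in> space (M i) \<Longrightarrow> \<bar>f i x\<bar> \<le> 1"
  shows "(\<integral>y. ((\<Sum>i<m. f i (y i)) / m - c)\<^sup>2 \<partial>PiM {..<m} M)
          \<le> ((\<Sum>i<m. \<integral>z. f i z \<partial>M i) / m - c)\<^sup>2 + 1 / m"
proof -
  interpret product_prob_space M "{..<m}"
    using Mp by (auto simp: product_prob_space_def product_prob_space_axioms_def
        product_sigma_finite_def prob_space_imp_sigma_finite)
  let ?P = "PiM {..<m} M"
  define a where "a i = (\<integral>z. f i z \<partial>M i)" for i
  define d where "d = (\<Sum>i<m. a i) / m - c"
  define Z where "Z i y = f i (y i) - a i" for i y
  have intf: "integrable (M i) (f i)" if "i < m" for i
    by (rule fin_int[of "M i" "f i" 1]) (auto intro: fb[OF that] fm prob_space.finite_measure[OF Mp])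
  have abnd: "\<bar>a i\<bar> \<le> 1" if "i < m" for i
  proof -
    have "a i \<le> 1" unfolding a_def
      by (rule prob_space.integral_le_const[OF Mp intf[OF that]]) (auto intro!: AE_I2 dest: fb[OF that])
    moreover have "- a i \<le> 1" unfolding a_def integral_minus[symmetric]
      by (rule prob_space.integral_le_const[OF Mp]) (auto intro!: AE_I2 intf[OF that] dest: fb[OF that])
    ultimately show ?thesis by linarith
  qed
  have Zm[measurable]: "(\<lambda>y. Z i y) \<in> borel_measurable ?P" if "i < m" for i
    unfolding Z_def using that
    by (intro borel_measurable_diff measurable_const measurable_compose[OF measurable_component_singleton[of i "{..<m}" M] fm]) auto
  have Zb: "\<bar>Z i y\<bar> \<le> 2" if "i < m" "y \<in> space ?P" for i y
  proof -
    have "y i \<in> space (M i)" using that by (auto simp: space_PiM)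
    then show ?thesis unfolding Z_def using fb[OF that(1)] abnd[OF that(1)] by fastforce
  qed
  have finP: "finite_measure ?P" by unfold_locales
  have ic: "integrable (M l) (\<lambda>z. c')" for l c'
    by (rule finite_measure.integrable_const[OF prob_space.finite_measure[OF Mp]])
  have intZ: "integrable ?P (\<lambda>y. Z i y)" if "i < m" for i
    by (rule fin_int[where B=2]) (auto intro: Zb[OF that] finP Zm[OF that])
  have intZZ: "integrable ?P (\<lambda>y. Z i y * Z k y)" if "i < m" "k < m" for i k
  proof (rule fin_int[where B=4])
    show "finite_measure ?P" by (rule finP)
    show "(\<lambda>y. Z i y * Z k y) \<in> borel_measurable ?P" using that Zm by auto
    fix y assume "y \<in> space ?P"
    then have "\<bar>Z i y\<bar> * \<bar>Z k y\<bar> \<le> 2 * 2" using Zb[OF that(1)] Zb[OF that(2)]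
      by (intro mult_mono) auto
    then show "\<bar>Z i y * Z k y\<bar> \<le> 4" by (simp add: abs_mult)
  qed
  have EZ: "(\<integral>y. Z i y \<partial>?P) = 0" if "i < m" for i
  proof -
    have "(\<integral>y. Z i y \<partial>?P) = (\<integral>y. (\<Prod>l\<in>{..<m}. (\<lambda>l z. if l = i then f i z - a i else 1) l (y l)) \<partial>?P)"
      using that by (intro Bochner_Integration.integral_cong[OF refl]) (simp add: Z_def prod.delta)
    also have "\<dots> = (\<Prod>l\<in>{..<m}. integral\<^sup>L (M l) ((\<lambda>l z. if l = i then f i z - a i else 1) l))"
      apply (rule product_integral_prod, simp)
      subgoal for l by (cases "l = i"; cases "l = k") (auto intro!: Bochner_Integration.integrable_diff intf ic)
      done
    also have "\<dots> = 0" using that intf[OF that]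
      by (intro prod_zero) (auto simp: a_def intro!: bexI[of _ i] Bochner_Integration.integral_diff[THEN trans] ic intf simp: prob_space.prob_space[OF Mp])
    finally show ?thesis .
  qed
  have EZZ: "(\<integral>y. Z i y * Z k y \<partial>?P) = 0" if "i < m" "k < m" "i \<noteq> k" for i k
  proof -
    have "(\<integral>y. Z i y * Z k y \<partial>?P) = (\<integral>y. (\<Prod>l\<in>{..<m}. (\<lambda>l z. if l = i then f i z - a i else if l = k then f k z - a k else 1) l (y l)) \<partial>?P)"
      using that by (intro Bochner_Integration.integral_cong[OF refl]) (simp add: Z_def, subst prod_two[of "{..<m}" i k, symmetric], auto intro!: prod.cong)
    also have "\<dots> = (\<Prod>l\<in>{..<m}. integral\<^sup>L (M l) ((\<lambda>l z. if l = i then f i z - a i else if l = k then f k z - a k else 1) l))"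
      apply (rule product_integral_prod, simp)
      subgoal for l by (cases "l = i"; cases "l = k") (auto intro!: Bochner_Integration.integrable_diff intf ic)
      done
    also have "\<dots> = 0" using that intf[OF that(1)]
      by (intro prod_zero) (auto simp: a_def intro!: bexI[of _ i] Bochner_Integration.integral_diff[THEN trans] ic intf simp: prob_space.prob_space[OF Mp])
    finally show ?thesis .
  qed
  have EZ2: "(\<integral>y. Z i y * Z i y \<partial>?P) \<le> 1" if "i < m" for i
  proof -
    have int2: "integrable (M i) (\<lambda>z. (f i z - a i)\<^sup>2)"
    proof (rule fin_int[where B=4])
      show "finite_measure (M i)" by (rule prob_space.finite_measure[OF Mp])
      show "(\<lambda>z. (f i z - a i)\<^sup>2) \<in> borel_measurable (M i)" using fm[of i] by measurable
      fix z assume z: "z \<in> space (M i)"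
      have "\<bar>f i z - a i\<bar> \<le> \<bar>2\<bar>" using fb[OF that z] abnd[OF that] by linarith
      then have "(f i z - a i)\<^sup>2 \<le> 2\<^sup>2" by (simp only: abs_le_square_iff)
      then show "\<bar>(f i z - a i)\<^sup>2\<bar> \<le> 4" by simp
    qed
    have "(\<integral>y. Z i y * Z i y \<partial>?P) = (\<integral>y. (\<Prod>l\<in>{..<m}. (\<lambda>l z. if l = i then (f i z - a i)\<^sup>2 else 1) l (y l)) \<partial>?P)"
      using that by (intro Bochner_Integration.integral_cong[OF refl]) (simp add: Z_def prod.delta power2_eq_square)
    also have "\<dots> = (\<Prod>l\<in>{..<m}. integral\<^sup>L (M l) ((\<lambda>l z. if l = i then (f i z - a i)\<^sup>2 else 1) l))"
      apply (rule product_integral_prod, simp)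
      subgoal for l by (cases "l = i") (auto intro!: int2 ic)
      done
    also have "\<dots> = (\<integral>z. (f i z - a i)\<^sup>2 \<partial>M i)"
      using that by (subst prod.remove[of _ i]) (auto intro!: prod.neutral simp: prob_space.prob_space[OF Mp])
    also have "\<dots> \<le> 1"
    proof -
      have f2b: "(f i z)\<^sup>2 \<le> 1" if "z \<in> space (M i)" for z
      proof -
        have "\<bar>f i z\<bar> \<le> \<bar>1\<bar>" using fb[OF \<open>i < m\<close> that] by simp
        then show ?thesis by (simp only: abs_le_square_iff) simp
      qed
      have intf2: "integrable (M i) (\<lambda>z. (f i z)\<^sup>2)"
        by (rule fin_int[where B=1]) (use f2b prob_space.finite_measure[OF Mp] fm[of i] in auto)
      have "(\<integral>z. (f i z - a i)\<^sup>2 \<partial>M i) = (\<integral>z. (f i z)\<^sup>2 - 2 * a i * f i z + (a i)\<^sup>2 \<partial>M i)"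
        by (intro Bochner_Integration.integral_cong[OF refl]) (simp add: power2_diff)
      also have "\<dots> = (\<integral>z. (f i z)\<^sup>2 \<partial>M i) - 2 * a i * a i + (a i)\<^sup>2"
        using intf[OF that] intf2 ic
        by (simp add: Bochner_Integration.integral_add Bochner_Integration.integral_diff prob_space.prob_space[OF Mp] a_def)
      also have "\<dots> \<le> 1"
      proof -
        have "(\<integral>z. (f i z)\<^sup>2 \<partial>M i) \<le> 1"
          by (rule prob_space.integral_le_const[OF Mp intf2]) (auto intro!: AE_I2 f2b)
        moreover have "0 \<le> a i * a i" by simp
        ultimately show ?thesis unfolding power2_eq_square by linarith
      qed
      finally show ?thesis .
    qed
    finally show ?thesis .
  qed
  have pt: "((\<Sum>i<m. f i (y i)) / m - c)\<^sup>2 =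
      (\<Sum>i<m. \<Sum>k<m. Z i y * Z k y) / (real m * real m) + (2 * d / m) * (\<Sum>i<m. Z i y) + d\<^sup>2" for y
  proof -
    have s1: "(\<Sum>i<m. Z i y) = (\<Sum>i<m. f i (y i)) - (\<Sum>i<m. a i)"
      unfolding Z_def by (rule sum_subtractf)
    have s2: "(\<Sum>i<m. \<Sum>k<m. Z i y * Z k y) = (\<Sum>i<m. Z i y) * (\<Sum>i<m. Z i y)"
      by (rule sum_product[symmetric])
    show ?thesis unfolding s2 s1 d_def using m
      by (simp add: field_simps power2_eq_square)
  qed
  have intS: "integrable ?P (\<lambda>y. \<Sum>i<m. \<Sum>k<m. Z i y * Z k y)"
    using intZZ by (auto intro!: Bochner_Integration.integrable_sum)
  have intS1: "integrable ?P (\<lambda>y. \<Sum>i<m. Z i y)"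
    using intZ by (auto intro!: Bochner_Integration.integrable_sum)
  have "(\<integral>y. ((\<Sum>i<m. f i (y i)) / m - c)\<^sup>2 \<partial>?P) =
      (\<integral>y. (\<Sum>i<m. \<Sum>k<m. Z i y * Z k y) / (real m * real m) + (2 * d / m) * (\<Sum>i<m. Z i y) + d\<^sup>2 \<partial>?P)"
    by (simp only: pt)
  also have "\<dots> = (\<integral>y. (\<Sum>i<m. \<Sum>k<m. Z i y * Z k y) \<partial>?P) / (real m * real m)
       + (2 * d / m) * (\<integral>y. (\<Sum>i<m. Z i y) \<partial>?P) + d\<^sup>2"
    using intS intS1 by (simp add: Bochner_Integration.integral_add prob_space P.prob_space)
  also have "(\<integral>y. (\<Sum>i<m. Z i y) \<partial>?P) = 0"
    using intZ EZ by (simp add: Bochner_Integration.integral_sum)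
  also have "(\<integral>y. (\<Sum>i<m. \<Sum>k<m. Z i y * Z k y) \<partial>?P) = (\<Sum>i<m. \<integral>y. Z i y * Z i y \<partial>?P)"
  proof -
    have "(\<integral>y. (\<Sum>i<m. \<Sum>k<m. Z i y * Z k y) \<partial>?P) = (\<Sum>i<m. \<Sum>k<m. \<integral>y. Z i y * Z k y \<partial>?P)"
      apply (subst Bochner_Integration.integral_sum)
       apply (auto intro!: Bochner_Integration.integrable_sum intZZ sum.cong)
      apply (subst Bochner_Integration.integral_sum)
       apply (auto intro!: intZZ)
      done
    also have "\<dots> = (\<Sum>i<m. \<integral>y. Z i y * Z i y \<partial>?P)"
    proof (rule sum.cong[OF refl])
      fix i assume i: "i \<in> {..<m}"
      show "(\<Sum>k<m. \<integral>y. Z i y * Z k y \<partial>?P) = (\<integral>y. Z i y * Z i y \<partial>?P)"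
        using i by (subst sum.remove[of _ i]) (auto intro!: sum.neutral EZZ)
    qed
    finally show ?thesis .
  qed
  also have "(\<Sum>i<m. \<integral>y. Z i y * Z i y \<partial>?P) \<le> (\<Sum>i<m. 1)"
    by (rule sum_mono) (use EZ2 in auto)
  finally have "(\<integral>y. ((\<Sum>i<m. f i (y i)) / m - c)\<^sup>2 \<partial>?P) \<le> real m / (real m * real m) + d\<^sup>2"
    by (simp add: divide_right_mono)
  then show ?thesis using m by (simp add: d_def a_def)
qed

lemma pim_var:
  fixes M :: "nat \<Rightarrow> 'a measure" and f :: "'a \<Rightarrow> real"
  assumes m: "0 < m" and Mp: "\<And>i. i < m \<Longrightarrow> prob_space (M i)"
    and fm: "\<And>i. i < m \<Longrightarrow> f \<in> borel_measurable (M i)"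
    and fb: "\<And>i x. i < m \<Longrightarrow> x \<in> space (M i) \<Longrightarrow> \<bar>f x\<bar> \<le> 1"
  shows "(\<integral>y. (emp_mean m f y - c)\<^sup>2 \<partial>PiM {..<m} M)
          \<le> ((\<Sum>i<m. \<integral>z. f z \<partial>M i) / m - c)\<^sup>2 + 1 / m"
proof -
  define M' where "M' i = (if i < m then M i else M 0)" for i
  have "PiM {..<m} M = PiM {..<m} M'" by (rule PiM_cong) (auto simp: M'_def)
  moreover have "(\<Sum>i<m. \<integral>z. f z \<partial>M i) = (\<Sum>i<m. \<integral>z. f z \<partial>M' i)"
    by (auto simp: M'_def)
  moreover have "(\<integral>y. (emp_mean m f y - c)\<^sup>2 \<partial>PiM {..<m} M') \<le> ((\<Sum>i<m. \<integral>z. f z \<partial>M' i) / m - c)\<^sup>2 + 1 / m"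
    unfolding emp_mean_def
    by (rule pim_var0[where f="\<lambda>_. f"]) (use m Mp fm fb in \<open>auto simp: M'_def\<close>)
  ultimately show ?thesis by simp
qed


lemma measurable_PiM_kernel:
  fixes k :: "nat \<Rightarrow> 'b \<Rightarrow> 'a measure"
  assumes kmeas: "\<And>i. i < m \<Longrightarrow> k i \<in> M \<rightarrow>\<^sub>M subprob_algebra N"
    and kprob: "\<And>i x. i < m \<Longrightarrow> x \<in> space M \<Longrightarrow> prob_space (k i x)"
  shows "(\<lambda>x. PiM {..<m} (\<lambda>i. k i x)) \<in> M \<rightarrow>\<^sub>M subprob_algebra (PiM {..<m} (\<lambda>_. N))"
proof (rule measurable_subprob_algebra_generated[where \<Omega>="\<Pi>\<^sub>E i\<in>{..<m}. space N" and G="prod_algebra {..<m} (\<lambda>_. N)"])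
  show "sets (PiM {..<m} (\<lambda>_. N)) = sigma_sets (\<Pi>\<^sub>E i\<in>{..<m}. space N) (prod_algebra {..<m} (\<lambda>_. N))"
    by (rule sets_PiM)
  show "Int_stable (prod_algebra {..<m} (\<lambda>_. N))" by (rule Int_stable_prod_algebra)
  show "prod_algebra {..<m} (\<lambda>_. N) \<subseteq> Pow (\<Pi>\<^sub>E i\<in>{..<m}. space N)"
    by (rule prod_algebra_sets_into_space)
  have sp: "space (k i x) = space N" if "i < m" "x \<in> space M" for i x
    using sets_kernel[OF kmeas[OF that(1)] that(2)] by (rule sets_eq_imp_space_eq)
  fix a assume a: "a \<in> space M"
  show "subprob_space (PiM {..<m} (\<lambda>i. k i a))"
    using a kprob by (auto intro!: prob_space_imp_subprob_space prob_space_PiM)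
  show "sets (PiM {..<m} (\<lambda>i. k i a)) = sets (PiM {..<m} (\<lambda>_. N))"
    using a sets_kernel[OF kmeas] by (intro sets_PiM_cong) auto
next
  have sp: "space (k i x) = space N" if "i < m" "x \<in> space M" for i x
    using sets_kernel[OF kmeas[OF that(1)] that(2)] by (rule sets_eq_imp_space_eq)
  fix A assume "A \<in> prod_algebra {..<m} (\<lambda>_. N)"
  then obtain E where A: "A = Pi\<^sub>E {..<m} E" and E: "E \<in> (\<Pi> i\<in>{..<m}. sets N)"
    by (rule prod_algebraE_all)
  have "(\<lambda>x. \<Prod>i\<in>{..<m}. emeasure (k i x) (E i)) \<in> borel_measurable M"
    using E by (intro borel_measurable_prod_ennreal measurable_emeasure_kernel[OF kmeas]) auto
  moreover have "emeasure (PiM {..<m} (\<lambda>i. k i x)) A = (\<Prod>i\<in>{..<m}. emeasure (k i x) (E i))"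
    if x: "x \<in> space M" for x
  proof -
    have Ek: "E i \<in> sets (k i x)" if "i < m" for i
      using E that sets_kernel[OF kmeas[OF that] x] by auto
    have "A = prod_emb {..<m} (\<lambda>i. k i x) {..<m} (Pi\<^sub>E {..<m} E)"
      unfolding A by (rule prod_emb_PiE_same_index[symmetric]) (use Ek sets.sets_into_space in auto)
    then show ?thesis
      using emeasure_PiM_emb[of "{..<m}" "\<lambda>i. k i x" "{..<m}" E] kprob[OF _ x] Ek by auto
  qed
  ultimately show "(\<lambda>x. emeasure (PiM {..<m} (\<lambda>i. k i x)) A) \<in> borel_measurable M"
    by (subst measurable_cong) auto
next
  have sp: "space (k i x) = space N" if "i < m" "x \<in> space M" for i x
    using sets_kernel[OF kmeas[OF that(1)] that(2)] by (rule sets_eq_imp_space_eq)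
  have "emeasure (PiM {..<m} (\<lambda>i. k i x)) (\<Pi>\<^sub>E i\<in>{..<m}. space N) = 1" if x: "x \<in> space M" for x
  proof -
    interpret prob_space "PiM {..<m} (\<lambda>i. k i x)" using kprob[OF _ x] by (intro prob_space_PiM) auto
    have "(\<Pi>\<^sub>E i\<in>{..<m}. space N) = space (PiM {..<m} (\<lambda>i. k i x))"
      using sp[OF _ x] unfolding space_PiM by (intro PiE_cong) auto
    then show ?thesis by (simp add: emeasure_space_1)
  qed
  then show "(\<lambda>x. emeasure (PiM {..<m} (\<lambda>i. k i x)) (\<Pi>\<^sub>E i\<in>{..<m}. space N)) \<in> borel_measurable M"
    by (subst measurable_cong[where g="\<lambda>_. 1"]) auto
qed


lemma weight_meas:
  assumes l: "l \<in> borel_measurable S" and j: "j < m"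
  shows "(\<lambda>x. smc_weight m l W t x j) \<in> borel_measurable (PiM {..<m} (\<lambda>_. S))"
proof -
  have lk: "(\<lambda>x. l (x k)) \<in> borel_measurable (PiM {..<m} (\<lambda>_. S))" if "k < m" for k
    using that by (intro measurable_compose[OF measurable_component_singleton[of k "{..<m}" "\<lambda>_. S"] l]) auto
  show ?thesis unfolding smc_weight_def
    by (intro borel_measurable_divide borel_measurable_sum measurable_compose[OF _ borel_measurable_exp] borel_measurable_times measurable_const lk j) auto
qed

lemma weight_pos: "0 < m \<Longrightarrow> 0 < smc_weight m l W t x j"
  unfolding smc_weight_def
  by (intro divide_pos_pos exp_gt_zero sum_pos) auto

lemma weight_sum: "0 < m \<Longrightarrow> (\<Sum>j<m. smc_weight m l W t x j) = 1"
proof -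
  assume m: "0 < m"
  have "0 < (\<Sum>k<m. exp (- (W (Suc t) - W t) * l (x k)))" using m by (intro sum_pos) auto
  then show ?thesis unfolding smc_weight_def sum_divide_distrib[symmetric] by simp
qed

lemma weight_prob:
  assumes m: "0 < m"
  shows "prob_space (point_measure {..<m} (\<lambda>j. ennreal (smc_weight m l W t x j)))"
proof (rule prob_space_point_measure)
  have "(\<Sum>j<m. ennreal (smc_weight m l W t x j)) = ennreal (\<Sum>j<m. smc_weight m l W t x j)"
    using weight_pos[OF m, of l W t x] by (intro sum_ennreal) (auto intro: less_imp_le)
  then show "(\<Sum>j<m. ennreal (smc_weight m l W t x j)) = 1" using weight_sum[OF m] by simp
qed auto

lemma weight_kernel:
  assumes l: "l \<in> borel_measurable S" and m: "0 < m"
  shows "(\<lambda>x. point_measure {..<m} (\<lambda>j. ennreal (smc_weight m l W t x j)))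
     \<in> PiM {..<m} (\<lambda>_. S) \<rightarrow>\<^sub>M subprob_algebra (count_space {..<m})"
proof (rule measurable_subprob_algebra)
  fix x show "subprob_space (point_measure {..<m} (\<lambda>j. ennreal (smc_weight m l W t x j)))"
    using weight_prob[OF m] by (rule prob_space_imp_subprob_space)
  show "sets (point_measure {..<m} (\<lambda>j. ennreal (smc_weight m l W t x j))) = sets (count_space {..<m})"
    by (simp add: sets_point_measure)
next
  fix A assume A: "A \<in> sets (count_space {..<m})"
  then have "(\<lambda>x. \<Sum>j\<in>A. ennreal (smc_weight m l W t x j)) \<in> borel_measurable (PiM {..<m} (\<lambda>_. S))"
    by (intro borel_measurable_sum measurable_compose[OF weight_meas[OF l] measurable_ennreal]) auto
  then show "(\<lambda>x. emeasure (point_measure {..<m} (\<lambda>j. ennreal (smc_weight m l W t x j))) A) \<in> borel_measurable (PiM {..<m} (\<lambda>_. S))"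
    using A by (subst emeasure_point_measure_finite) auto
qed

lemma step_meas:
  assumes l: "l \<in> borel_measurable S" and m: "0 < m"
    and Km: "K (Suc t) \<in> S \<rightarrow>\<^sub>M subprob_algebra S"
    and Kp: "\<And>x. x \<in> space S \<Longrightarrow> prob_space (K (Suc t) x)"
  shows "smc_step S m l W K t \<in> PiM {..<m} (\<lambda>_. S) \<rightarrow>\<^sub>M subprob_algebra (PiM {..<m} (\<lambda>_. S))"
proof -
  let ?MS = "PiM {..<m} (\<lambda>_. S)" and ?MJ = "PiM {..<m} (\<lambda>_. count_space {..<m})"
  have Q: "(\<lambda>x. PiM {..<m} (\<lambda>_. point_measure {..<m} (\<lambda>j. ennreal (smc_weight m l W t x j))))
      \<in> ?MS \<rightarrow>\<^sub>M subprob_algebra ?MJ"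
    by (rule measurable_PiM_kernel) (auto intro: weight_kernel[OF l m] weight_prob[OF m])
  have comp: "(\<lambda>z. fst z (snd z i)) \<in> ?MS \<Otimes>\<^sub>M ?MJ \<rightarrow>\<^sub>M S" if i: "i < m" for i
  proof (rule measurable_compose_countable'[where I="{..<m}" and f="\<lambda>j z. fst z j" and g="\<lambda>z. snd z i"])
    fix j :: nat assume "j \<in> {..<m}"
    then show "(\<lambda>z. fst z j) \<in> ?MS \<Otimes>\<^sub>M ?MJ \<rightarrow>\<^sub>M S"
      by (intro measurable_compose[OF measurable_fst measurable_component_singleton]) auto
  next
    show "(\<lambda>z. snd z i) \<in> ?MS \<Otimes>\<^sub>M ?MJ \<rightarrow>\<^sub>M count_space {..<m}"
      using i by (intro measurable_compose[OF measurable_snd measurable_component_singleton]) auto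
  qed auto
  have G: "(\<lambda>z. PiM {..<m} (\<lambda>i. K (Suc t) (fst z (snd z i)))) \<in> ?MS \<Otimes>\<^sub>M ?MJ \<rightarrow>\<^sub>M subprob_algebra ?MS"
  proof (rule measurable_PiM_kernel)
    fix i assume "i < m"
    then show "(\<lambda>z. K (Suc t) (fst z (snd z i))) \<in> ?MS \<Otimes>\<^sub>M ?MJ \<rightarrow>\<^sub>M subprob_algebra S"
      by (rule measurable_compose[OF comp Km])
  next
    fix i z assume i: "i < m" and z: "z \<in> space (?MS \<Otimes>\<^sub>M ?MJ)"
    then show "prob_space (K (Suc t) (fst z (snd z i)))"
      using measurable_space[OF comp[OF i] z] by (intro Kp)
  qed
  show ?thesis unfolding smc_step_def
    by (rule measurable_bind[OF Q]) (use G in simp)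
qed



locale gb =
  fixes \<rho>0 :: "'a measure" and l :: "'a \<Rightarrow> real" and C :: real
  assumes pr: "prob_space \<rho>0" and lm: "l \<in> borel_measurable \<rho>0"
    and lb: "\<And>x. x \<in> space \<rho>0 \<Longrightarrow> 0 \<le> l x \<and> l x \<le> C"
begin

definition Z :: "real \<Rightarrow> real" where "Z V = (\<integral>x. exp (- V * l x) \<partial>\<rho>0)"

lemma expm: "(\<lambda>x. exp (- V * l x)) \<in> borel_measurable \<rho>0"
  using lm by measurable

lemma exp_int: "0 \<le> V \<Longrightarrow> integrable \<rho>0 (\<lambda>x. exp (- V * l x))"
  by (rule fin_int[where B=1]) (use pr expm lb in \<open>auto simp: prob_space.finite_measure mult_nonneg_nonneg\<close>)

lemma Z_pos: "0 \<le> V \<Longrightarrow> 0 < Z V"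
proof -
  assume V: "0 \<le> V"
  have "exp (- V * C) \<le> Z V" unfolding Z_def
  proof -
    have "(\<integral>x. exp (- V * C) \<partial>\<rho>0) \<le> (\<integral>x. exp (- V * l x) \<partial>\<rho>0)"
      by (rule integral_mono) (use exp_int[OF V] lb V pr in \<open>auto simp: prob_space.finite_measure finite_measure.integrable_const mult_left_mono\<close>)
    then show "exp (- V * C) \<le> (\<integral>x. exp (- V * l x) \<partial>\<rho>0)" using pr by (simp add: prob_space.prob_space)
  qed
  then show ?thesis by (meson exp_gt_zero less_le_trans)
qed

lemma sets_gibbs[simp]: "sets (gibbs l V \<rho>0) = sets \<rho>0" unfolding gibbs_def by simp
lemma space_gibbs[simp]: "space (gibbs l V \<rho>0) = space \<rho>0" unfolding gibbs_def by simp

lemma gibbs_int: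
  assumes V: "0 \<le> V" and g: "g \<in> borel_measurable \<rho>0"
  shows "(\<integral>x. g x \<partial>gibbs l V \<rho>0) = (\<integral>x. exp (- V * l x) * g x \<partial>\<rho>0) / Z V"
proof -
  have "(\<integral>x. g x \<partial>gibbs l V \<rho>0) = (\<integral>x. (exp (- V * l x) / Z V) *\<^sub>R g x \<partial>\<rho>0)"
    unfolding gibbs_def Z_def[symmetric]
    by (rule integral_density) (use g expm Z_pos[OF V] in \<open>auto intro!: AE_I2\<close>)
  also have "\<dots> = (\<integral>x. exp (- V * l x) * g x \<partial>\<rho>0) / Z V"
    by (simp add: integral_divide_zero[symmetric] del: integral_divide_zero)
  finally show ?thesis .
qed

lemma gibbs_prob:
  assumes V: "0 \<le> V" shows "prob_space (gibbs l V \<rho>0)"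
proof (rule prob_spaceI)
  have "emeasure (gibbs l V \<rho>0) (space (gibbs l V \<rho>0)) = (\<integral>\<^sup>+x. ennreal (exp (- V * l x) / Z V) \<partial>\<rho>0)"
    unfolding gibbs_def Z_def[symmetric]
    by (subst emeasure_density) (use expm in \<open>auto intro!: nn_integral_cong simp: indicator_def\<close>)
  also have "\<dots> = ennreal (\<integral>x. exp (- V * l x) / Z V \<partial>\<rho>0)"
    by (rule nn_integral_eq_integral) (use exp_int[OF V] Z_pos[OF V] in \<open>auto intro!: AE_I2\<close>)
  also have "(\<integral>x. exp (- V * l x) / Z V \<partial>\<rho>0) = 1"
    using Z_pos[OF V] by (simp add: Z_def)
  finally show "emeasure (gibbs l V \<rho>0) (space (gibbs l V \<rho>0)) = 1" by simp
qed

lemma gibbs_step: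
  assumes Va: "0 \<le> Va" and Vb: "Va \<le> Vb" and g: "g \<in> borel_measurable \<rho>0"
    and gb: "\<And>x. x \<in> space \<rho>0 \<Longrightarrow> \<bar>g x\<bar> \<le> 1"
  shows "(\<integral>x. g x \<partial>gibbs l Vb \<rho>0) =
     (\<integral>x. exp (- (Vb - Va) * l x) * g x \<partial>gibbs l Va \<rho>0) / (\<integral>x. exp (- (Vb - Va) * l x) \<partial>gibbs l Va \<rho>0)"
proof -
  have Vb0: "0 \<le> Vb" using Va Vb by simp
  have e: "exp (- Va * l x) * (exp (- (Vb - Va) * l x) * h) = exp (- Vb * l x) * h" for x h
    by (simp add: mult.assoc[symmetric] exp_add[symmetric] algebra_simps)
  have m1: "(\<lambda>x. exp (- (Vb - Va) * l x) * g x) \<in> borel_measurable \<rho>0" using g lm by measurable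
  have "(\<integral>x. exp (- (Vb - Va) * l x) * g x \<partial>gibbs l Va \<rho>0) = (\<integral>x. exp (- Va * l x) * (exp (- (Vb - Va) * l x) * g x) \<partial>\<rho>0) / Z Va"
    by (rule gibbs_int[OF Va m1])
  also have "(\<integral>x. exp (- Va * l x) * (exp (- (Vb - Va) * l x) * g x) \<partial>\<rho>0) = (\<integral>x. exp (- Vb * l x) * g x \<partial>\<rho>0)"
    by (simp only: e)
  finally have 1: "(\<integral>x. exp (- (Vb - Va) * l x) * g x \<partial>gibbs l Va \<rho>0) = (\<integral>x. exp (- Vb * l x) * g x \<partial>\<rho>0) / Z Va" .
  have "(\<integral>x. exp (- (Vb - Va) * l x) \<partial>gibbs l Va \<rho>0) = (\<integral>x. exp (- Va * l x) * exp (- (Vb - Va) * l x) \<partial>\<rho>0) / Z Va"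
    by (rule gibbs_int[OF Va expm])
  also have "(\<integral>x. exp (- Va * l x) * exp (- (Vb - Va) * l x) \<partial>\<rho>0) = Z Vb"
    unfolding Z_def using e[of _ 1] by simp
  finally have 2: "(\<integral>x. exp (- (Vb - Va) * l x) \<partial>gibbs l Va \<rho>0) = Z Vb / Z Va" .
  show ?thesis unfolding 1 2 using Z_pos[OF Va] Z_pos[OF Vb0] gibbs_int[OF Vb0 g] by simp
qed

end


lemma sq_sum: "(\<bar>u\<bar> + \<bar>v\<bar>)\<^sup>2 \<le> 2 * (u\<^sup>2 + v\<^sup>2)" for u v :: real
proof -
  have "0 \<le> (\<bar>u\<bar> - \<bar>v\<bar>)\<^sup>2" by simp
  moreover have "(\<bar>u\<bar> + \<bar>v\<bar>)\<^sup>2 = \<bar>u\<bar>\<^sup>2 + \<bar>v\<bar>\<^sup>2 + 2 * \<bar>u\<bar> * \<bar>v\<bar>" by (rule power2_sum)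
  moreover have "(\<bar>u\<bar> - \<bar>v\<bar>)\<^sup>2 = \<bar>u\<bar>\<^sup>2 + \<bar>v\<bar>\<^sup>2 - 2 * \<bar>u\<bar> * \<bar>v\<bar>" by (rule power2_diff)
  ultimately show ?thesis by simp
qed

lemma ratio_ineq:
  fixes A0 A1 B0 B1 e :: real
  assumes e: "0 < e" and A0: "1 \<le> e * A0" and B0: "0 < B0" and B1: "\<bar>B1\<bar> \<le> B0"
  shows "(A1/A0 - B1/B0)\<^sup>2 \<le> 2 * e\<^sup>2 * ((A1 - B1)\<^sup>2 + (A0 - B0)\<^sup>2)"
proof -
  define r where "r = B1 / B0"
  have r: "\<bar>r\<bar> \<le> 1"
  proof -
    have "\<bar>r\<bar> = \<bar>B1\<bar> / B0" using B0 by (simp add: r_def abs_divide)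
    also have "\<dots> \<le> 1" using B0 B1 by (simp add: divide_le_eq)
    finally show ?thesis .
  qed
  have A0p: "0 < A0"
  proof -
    have "0 < e * A0" using A0 by linarith
    then show ?thesis using e by (rule zero_less_mult_pos)
  qed
  have eq: "A1/A0 - B1/B0 = ((A1 - B1) - (A0 - B0) * r) / A0"
    using A0p B0 by (simp add: r_def field_simps)
  have n: "\<bar>(A1 - B1) - (A0 - B0) * r\<bar> \<le> \<bar>A1 - B1\<bar> + \<bar>A0 - B0\<bar>"
  proof -
    have "\<bar>(A0 - B0) * r\<bar> = \<bar>A0 - B0\<bar> * \<bar>r\<bar>" by (rule abs_mult)
    also have "\<dots> \<le> \<bar>A0 - B0\<bar> * 1" by (rule mult_left_mono[OF r]) simp
    finally have "\<bar>(A0 - B0) * r\<bar> \<le> \<bar>A0 - B0\<bar>" by simp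
    then show ?thesis by linarith
  qed
  have inv: "1 / A0 \<le> e" using A0 A0p by (simp add: divide_le_eq mult.commute)
  have "\<bar>A1/A0 - B1/B0\<bar> \<le> e * (\<bar>A1 - B1\<bar> + \<bar>A0 - B0\<bar>)"
  proof -
    have "\<bar>A1/A0 - B1/B0\<bar> = \<bar>(A1 - B1) - (A0 - B0) * r\<bar> * (1 / A0)"
      unfolding eq using A0p by (simp add: abs_divide)
    also have "\<dots> \<le> (\<bar>A1 - B1\<bar> + \<bar>A0 - B0\<bar>) * e"
      by (rule mult_mono[OF n inv]) (use A0p in auto)
    also have "\<dots> = e * (\<bar>A1 - B1\<bar> + \<bar>A0 - B0\<bar>)" by (rule mult.commute)
    finally show ?thesis .
  qed
  then have "\<bar>A1/A0 - B1/B0\<bar> \<le> \<bar>e * (\<bar>A1 - B1\<bar> + \<bar>A0 - B0\<bar>)\<bar>" by linarith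
  then have "(A1/A0 - B1/B0)\<^sup>2 \<le> (e * (\<bar>A1 - B1\<bar> + \<bar>A0 - B0\<bar>))\<^sup>2"
    by (simp only: abs_le_square_iff)
  also have "\<dots> = e\<^sup>2 * (\<bar>A1 - B1\<bar> + \<bar>A0 - B0\<bar>)\<^sup>2" by (simp add: power_mult_distrib)
  also have "\<dots> \<le> e\<^sup>2 * (2 * ((A1 - B1)\<^sup>2 + (A0 - B0)\<^sup>2))"
    by (rule mult_left_mono[OF sq_sum]) simp
  also have "\<dots> = 2 * e\<^sup>2 * ((A1 - B1)\<^sup>2 + (A0 - B0)\<^sup>2)" by (simp only: ac_simps)
  finally show ?thesis .
qed



lemma Q_meas:
  fixes m :: nat
  assumes l: "l \<in> borel_measurable S" and m: "0 < m"
  shows "(\<lambda>x. PiM {..<m} (\<lambda>_. point_measure {..<m} (\<lambda>j. ennreal (smc_weight m l W t x j))))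
      \<in> PiM {..<m} (\<lambda>_. S) \<rightarrow>\<^sub>M subprob_algebra (PiM {..<m} (\<lambda>_. count_space {..<m}))"
  by (rule measurable_PiM_kernel) (auto intro: weight_kernel[OF l m] weight_prob[OF m])

lemma comp_meas:
  fixes m :: nat
  assumes i: "i < m"
  shows "(\<lambda>z. fst z (snd z i)) \<in> PiM {..<m} (\<lambda>_. S) \<Otimes>\<^sub>M PiM {..<m} (\<lambda>_. count_space {..<m}) \<rightarrow>\<^sub>M S"
proof (rule measurable_compose_countable'[where I="{..<m}" and f="\<lambda>j z. fst z j" and g="\<lambda>z. snd z i"])
  fix j :: nat assume "j \<in> {..<m}"
  then show "(\<lambda>z. fst z j) \<in> PiM {..<m} (\<lambda>_. S) \<Otimes>\<^sub>M PiM {..<m} (\<lambda>_. count_space {..<m}) \<rightarrow>\<^sub>M S"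
    by (intro measurable_compose[OF measurable_fst measurable_component_singleton]) auto
next
  show "(\<lambda>z. snd z i) \<in> PiM {..<m} (\<lambda>_. S) \<Otimes>\<^sub>M PiM {..<m} (\<lambda>_. count_space {..<m}) \<rightarrow>\<^sub>M count_space {..<m}"
    using i by (intro measurable_compose[OF measurable_snd measurable_component_singleton]) auto
qed auto

lemma G_meas:
  fixes m :: nat
  assumes Km: "K (Suc t) \<in> S \<rightarrow>\<^sub>M subprob_algebra S"
    and Kp: "\<And>x. x \<in> space S \<Longrightarrow> prob_space (K (Suc t) x)"
  shows "(\<lambda>z. PiM {..<m} (\<lambda>i. K (Suc t) (fst z (snd z i))))
     \<in> PiM {..<m} (\<lambda>_. S) \<Otimes>\<^sub>M PiM {..<m} (\<lambda>_. count_space {..<m}) \<rightarrow>\<^sub>M subprob_algebra (PiM {..<m} (\<lambda>_. S))"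
proof (rule measurable_PiM_kernel)
  fix i assume "i < m"
  then show "(\<lambda>z. K (Suc t) (fst z (snd z i))) \<in> PiM {..<m} (\<lambda>_. S) \<Otimes>\<^sub>M PiM {..<m} (\<lambda>_. count_space {..<m}) \<rightarrow>\<^sub>M subprob_algebra S"
    by (rule measurable_compose[OF comp_meas Km])
next
  fix i z assume i: "i < m" and z: "z \<in> space (PiM {..<m} (\<lambda>_. S) \<Otimes>\<^sub>M PiM {..<m} (\<lambda>_. count_space {..<m}))"
  then show "prob_space (K (Suc t) (fst z (snd z i)))"
    using measurable_space[OF comp_meas[OF i] z] by (intro Kp)
qed

lemma Gx_meas:
  fixes m :: nat
  assumes Km: "K (Suc t) \<in> S \<rightarrow>\<^sub>M subprob_algebra S"
    and Kp: "\<And>x. x \<in> space S \<Longrightarrow> prob_space (K (Suc t) x)"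
    and x: "x \<in> space (PiM {..<m} (\<lambda>_. S))"
  shows "(\<lambda>J. PiM {..<m} (\<lambda>i. K (Suc t) (x (J i))))
     \<in> PiM {..<m} (\<lambda>_. count_space {..<m}) \<rightarrow>\<^sub>M subprob_algebra (PiM {..<m} (\<lambda>_. S))"
  using measurable_compose[OF measurable_Pair1'[OF x] G_meas[where m=m and K=K and t=t and S=S, OF Km Kp]] by simp

lemma emp_bound:
  fixes m :: nat
  assumes "0 < m" "\<And>i. i < m \<Longrightarrow> \<bar>f (y i)\<bar> \<le> 1"
  shows "\<bar>emp_mean m f y\<bar> \<le> 1"
proof -
  have "\<bar>\<Sum>i<m. f (y i)\<bar> \<le> (\<Sum>i<m. 1)"
    using assms by (intro order_trans[OF sum_abs] sum_mono) auto
  then show ?thesis using assms(1) by (simp add: emp_mean_def abs_divide divide_le_eq)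
qed

lemma emp_meas:
  fixes m :: nat
  assumes "f \<in> borel_measurable N"
  shows "emp_mean m f \<in> borel_measurable (PiM {..<m} (\<lambda>_. N))"
  unfolding emp_mean_def[abs_def]
proof (intro borel_measurable_divide borel_measurable_sum measurable_const)
  fix i assume "i \<in> {..<m}"
  then show "(\<lambda>x. f (x i)) \<in> borel_measurable (PiM {..<m} (\<lambda>_. N))"
    by (intro measurable_compose[OF measurable_component_singleton[of i "{..<m}" "\<lambda>_. N"] assms]) auto
qed simp



lemma prob_abs_int:
  fixes f :: "'a \<Rightarrow> real"
  assumes P: "prob_space M" and fm: "f \<in> borel_measurable M" and fb: "\<And>x. x \<in> space M \<Longrightarrow> \<bar>f x\<bar> \<le> 1"
  shows "\<bar>\<integral>x. f x \<partial>M\<bar> \<le> 1"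
proof -
  have intf: "integrable M f" by (rule fin_int[where B=1]) (use P fm fb prob_space.finite_measure in auto)
  have "(\<integral>x. f x \<partial>M) \<le> 1"
    by (rule prob_space.integral_le_const[OF P intf]) (auto intro!: AE_I2 dest: fb)
  moreover have "- (\<integral>x. f x \<partial>M) \<le> 1" unfolding integral_minus[symmetric]
    by (rule prob_space.integral_le_const[OF P]) (auto intro!: AE_I2 intf dest: fb)
  ultimately show ?thesis by linarith
qed

lemma int_point:
  fixes g :: "nat \<Rightarrow> real"
  assumes w: "\<And>j. 0 \<le> w j"
  shows "(\<integral>j. g j \<partial>point_measure {..<m} (\<lambda>j. ennreal (w j))) = (\<Sum>j<m. w j * g j)"
proof -
  have "(\<integral>j. g j \<partial>point_measure {..<m} (\<lambda>j. ennreal (w j))) = (\<integral>j. w j *\<^sub>R g j \<partial>count_space {..<m})"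
    unfolding point_measure_def by (rule integral_density) (use w in auto)
  also have "\<dots> = (\<Sum>j<m. w j * g j)" by (simp add: lebesgue_integral_count_space_finite)
  finally show ?thesis .
qed

lemma inner_bound:
  fixes m :: nat and f :: "'a \<Rightarrow> real"
  assumes m: "0 < m" and l: "l \<in> borel_measurable S"
    and Km: "K (Suc t) \<in> S \<rightarrow>\<^sub>M subprob_algebra S"
    and Kp: "\<And>x. x \<in> space S \<Longrightarrow> prob_space (K (Suc t) x)"
    and fm: "f \<in> borel_measurable S" and fb: "\<And>x. x \<in> space S \<Longrightarrow> \<bar>f x\<bar> \<le> 1"
    and x: "x \<in> space (PiM {..<m} (\<lambda>_. S))"
  shows "(\<integral>y. (emp_mean m f y - c)\<^sup>2 \<partial>smc_step S m l W K t x)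
     \<le> ((\<Sum>j<m. smc_weight m l W t x j * (\<integral>z. f z \<partial>K (Suc t) (x j))) - c)\<^sup>2 + 2 / m"
proof -
  let ?MS = "PiM {..<m} (\<lambda>_. S)" and ?MJ = "PiM {..<m} (\<lambda>_. count_space {..<m})"
  let ?Q = "PiM {..<m} (\<lambda>_. point_measure {..<m} (\<lambda>j. ennreal (smc_weight m l W t x j)))"
  let ?G = "\<lambda>J. PiM {..<m} (\<lambda>i. K (Suc t) (x (J i)))"
  define Kf where "Kf y = (\<integral>z. f z \<partial>K (Suc t) y)" for y
  define g where "g j = Kf (x j)" for j
  define h where "h y = (emp_mean m f y - c)\<^sup>2" for y
  have xS: "x j \<in> space S" if "j < m" for j using x that by (auto simp: space_PiM)
  have Kfb: "\<bar>Kf y\<bar> \<le> 1" if "y \<in> space S" for y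
    unfolding Kf_def
  proof (rule prob_abs_int[OF Kp[OF that]])
    show "f \<in> borel_measurable (K (Suc t) y)"
      by (subst measurable_cong_sets[OF sets_kernel[OF Km that] refl]) (rule fm)
    fix z assume "z \<in> space (K (Suc t) y)"
    then show "\<bar>f z\<bar> \<le> 1" using fb sets_eq_imp_space_eq[OF sets_kernel[OF Km that]] by auto
  qed
  have Qp: "prob_space ?Q" by (rule prob_space_PiM) (use weight_prob[OF m] in auto)
  have Qs: "sets ?Q = sets ?MJ" by (rule sets_PiM_cong) (auto simp: sets_point_measure)
  have Gm: "?G \<in> ?Q \<rightarrow>\<^sub>M subprob_algebra ?MS"
    using Gx_meas[where K=K and t=t, OF Km Kp x] by (subst measurable_cong_sets[OF Qs refl])
  have hm: "h \<in> borel_measurable ?MS" unfolding h_def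
    by (intro borel_measurable_power borel_measurable_diff emp_meas[OF fm] measurable_const) simp
  have hb: "\<bar>h y\<bar> \<le> (1 + \<bar>c\<bar>)\<^sup>2" if "y \<in> space ?MS" for y
  proof -
    have "\<bar>emp_mean m f y\<bar> \<le> 1" using that m by (intro emp_bound) (auto simp: space_PiM intro!: fb)
    then have "\<bar>emp_mean m f y - c\<bar> \<le> \<bar>1 + \<bar>c\<bar>\<bar>" by linarith
    then show ?thesis unfolding h_def by (simp only: abs_le_square_iff abs_power2)
  qed
  have Jsp: "J i < m" if "J \<in> space ?Q" "i < m" for J i
  proof -
    have "J i \<in> space (point_measure {..<m} (\<lambda>j. ennreal (smc_weight m l W t x j)))"
      using that unfolding space_PiM by (rule PiE_mem[OF _ lessThan_iff[THEN iffD2]])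
    then show ?thesis by (simp add: space_point_measure)
  qed
  have gm: "emp_mean m g \<in> borel_measurable ?Q"
    by (subst measurable_cong_sets[OF Qs refl]) (rule emp_meas, simp)
  have gb: "\<bar>emp_mean m g J\<bar> \<le> 1" if "J \<in> space ?Q" for J
    using m by (intro emp_bound) (auto simp: g_def intro!: Kfb xS Jsp[OF that])
have intq: "integrable ?Q (\<lambda>J. (emp_mean m g J - c)\<^sup>2)"
  proof (rule fin_int[where B="(1 + \<bar>c\<bar>)\<^sup>2"])
    show "finite_measure ?Q" by (rule prob_space.finite_measure[OF Qp])
    show "(\<lambda>J. (emp_mean m g J - c)\<^sup>2) \<in> borel_measurable ?Q"
      by (intro borel_measurable_power borel_measurable_diff gm measurable_const) simp_all
    fix J assume J: "J \<in> space ?Q"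
    have "\<bar>emp_mean m g J - c\<bar> \<le> \<bar>1 + \<bar>c\<bar>\<bar>" using gb[OF J] by linarith
    then show "\<bar>(emp_mean m g J - c)\<^sup>2\<bar> \<le> (1 + \<bar>c\<bar>)\<^sup>2" by (simp only: abs_le_square_iff abs_power2)
  qed
  have "(\<integral>y. h y \<partial>smc_step S m l W K t x) = (\<integral>J. (\<integral>y. h y \<partial>?G J) \<partial>?Q)"
    unfolding smc_step_def
  proof (rule integral_bind[OF hm hb Gm, where B'=1])
    show "finite_measure ?Q" by (rule prob_space.finite_measure[OF Qp])
    show "AE J in ?Q. emeasure (?G J) (space (?G J)) \<le> ennreal 1"
      by (rule AE_I2) (simp add: subprob_space.emeasure_space_le_1[OF subprob_space_kernel[OF Gm]])
  qed
  also have "\<dots> \<le> (\<integral>J. (emp_mean m g J - c)\<^sup>2 + 1 / m \<partial>?Q)"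
  proof (rule integral_mono_AE')
    show "integrable ?Q (\<lambda>J. (emp_mean m g J - c)\<^sup>2 + 1 / m)"
    proof (rule fin_int[where B="(1 + \<bar>c\<bar>)\<^sup>2 + 1 / m"])
      show "finite_measure ?Q" by (rule prob_space.finite_measure[OF Qp])
      show "(\<lambda>J. (emp_mean m g J - c)\<^sup>2 + 1 / m) \<in> borel_measurable ?Q"
        by (intro borel_measurable_add borel_measurable_power borel_measurable_diff gm measurable_const) simp_all
      fix J assume J: "J \<in> space ?Q"
      have "\<bar>emp_mean m g J - c\<bar> \<le> \<bar>1 + \<bar>c\<bar>\<bar>" using gb[OF J] by linarith
      then have "(emp_mean m g J - c)\<^sup>2 \<le> (1 + \<bar>c\<bar>)\<^sup>2" by (simp only: abs_le_square_iff abs_power2)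
      then show "\<bar>(emp_mean m g J - c)\<^sup>2 + 1 / m\<bar> \<le> (1 + \<bar>c\<bar>)\<^sup>2 + 1 / m" by simp
    qed
    show "AE J in ?Q. 0 \<le> (emp_mean m g J - c)\<^sup>2 + 1 / m" by (rule AE_I2) simp
    show "AE J in ?Q. (\<integral>y. h y \<partial>?G J) \<le> (emp_mean m g J - c)\<^sup>2 + 1 / m"
    proof (rule AE_I2)
      fix J assume J: "J \<in> space ?Q"
      have xJ: "x (J i) \<in> space S" if "i < m" for i using xS Jsp[OF J that] .
      have "(\<integral>y. (emp_mean m f y - c)\<^sup>2 \<partial>?G J) \<le> ((\<Sum>i<m. \<integral>z. f z \<partial>K (Suc t) (x (J i))) / m - c)\<^sup>2 + 1 / m"
      proof (rule pim_var[OF m])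
        fix i assume i: "i < m"
        show "prob_space (K (Suc t) (x (J i)))" by (rule Kp[OF xJ[OF i]])
        show "f \<in> borel_measurable (K (Suc t) (x (J i)))"
          by (subst measurable_cong_sets[OF sets_kernel[OF Km xJ[OF i]] refl]) (rule fm)
        fix z assume "z \<in> space (K (Suc t) (x (J i)))"
        then show "\<bar>f z\<bar> \<le> 1" using fb sets_eq_imp_space_eq[OF sets_kernel[OF Km xJ[OF i]]] by auto
      qed
      moreover have "(\<Sum>i<m. \<integral>z. f z \<partial>K (Suc t) (x (J i))) / m = emp_mean m g J"
        by (simp add: emp_mean_def g_def Kf_def)
      ultimately show "(\<integral>y. h y \<partial>?G J) \<le> (emp_mean m g J - c)\<^sup>2 + 1 / m" by (simp add: h_def)
    qed
  qed
  also have "\<dots> = (\<integral>J. (emp_mean m g J - c)\<^sup>2 \<partial>?Q) + 1 / m"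
    using intq by (simp add: Bochner_Integration.integral_add prob_space.prob_space[OF Qp] finite_measure.integrable_const[OF prob_space.finite_measure[OF Qp]])
  also have "(\<integral>J. (emp_mean m g J - c)\<^sup>2 \<partial>?Q) \<le> ((\<Sum>i<m. \<integral>j. g j \<partial>point_measure {..<m} (\<lambda>j. ennreal (smc_weight m l W t x j))) / m - c)\<^sup>2 + 1 / m"
  proof (rule pim_var[OF m])
    fix i assume i: "i < m"
    show "prob_space (point_measure {..<m} (\<lambda>j. ennreal (smc_weight m l W t x j)))" by (rule weight_prob[OF m])
    show "g \<in> borel_measurable (point_measure {..<m} (\<lambda>j. ennreal (smc_weight m l W t x j)))"
    proof -
      have "sets (point_measure {..<m} (\<lambda>j. ennreal (smc_weight m l W t x j))) = sets (count_space {..<m})"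
        by (simp add: sets_point_measure)
      note ss = this
      show ?thesis by (subst measurable_cong_sets[OF ss refl]) simp
    qed
    fix z assume "z \<in> space (point_measure {..<m} (\<lambda>j. ennreal (smc_weight m l W t x j)))"
    then have "z < m" by (simp add: space_point_measure)
    then show "\<bar>g z\<bar> \<le> 1" unfolding g_def by (intro Kfb xS)
  qed
  also have "(\<Sum>i<m. \<integral>j. g j \<partial>point_measure {..<m} (\<lambda>j. ennreal (smc_weight m l W t x j))) / m
      = (\<Sum>j<m. smc_weight m l W t x j * (\<integral>z. f z \<partial>K (Suc t) (x j)))"
    using m by (simp add: int_point weight_pos less_imp_le g_def Kf_def)
  finally show ?thesis by (simp add: h_def)
qed



lemma sq_le4: "\<bar>a\<bar> \<le> 1 \<Longrightarrow> \<bar>b\<bar> \<le> 1 \<Longrightarrow> \<bar>(a - b)\<^sup>2\<bar> \<le> (4::real)"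
proof -
  assume "\<bar>a\<bar> \<le> 1" "\<bar>b\<bar> \<le> 1"
  then have "\<bar>a - b\<bar> \<le> \<bar>2\<bar>" by linarith
  then have "(a - b)\<^sup>2 \<le> 2\<^sup>2" by (simp only: abs_le_square_iff abs_power2)
  then show ?thesis by simp
qed

lemma step_bound:
  fixes S :: "'a measure" and \<rho>0 :: "'a measure" and l :: "'a \<Rightarrow> real" and C :: real and m :: nat
    and W :: "nat \<Rightarrow> real" and K :: "nat \<Rightarrow> 'a \<Rightarrow> 'a measure" and P :: "(nat \<Rightarrow> 'a) measure"
    and f :: "'a \<Rightarrow> real" and \<beta> :: real
  assumes pr: "prob_space \<rho>0" and sets_eq: "sets \<rho>0 = sets S" and lS: "l \<in> borel_measurable S"
    and lbS: "\<And>x. x \<in> space S \<Longrightarrow> 0 \<le> l x \<and> l x \<le> C" and m: "0 < m"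
    and Wa: "0 \<le> W t" and Wlt: "W t < W (Suc t)"
    and Km: "K (Suc t) \<in> S \<rightarrow>\<^sub>M subprob_algebra S"
    and Kp: "\<And>x. x \<in> space S \<Longrightarrow> prob_space (K (Suc t) x)"
    and Kinv: "gibbs l (W (Suc t)) \<rho>0 \<bind> K (Suc t) = gibbs l (W (Suc t)) \<rho>0"
    and Ps: "sets P = sets (PiM {..<m} (\<lambda>_. S))" and Pp: "prob_space P"
    and IH: "\<And>g. g \<in> borel_measurable S \<Longrightarrow> (\<And>x. x \<in> space S \<Longrightarrow> \<bar>g x\<bar> \<le> 1) \<Longrightarrow>
        (\<integral>x. (emp_mean m g x - (\<integral>y. g y \<partial>gibbs l (W t) \<rho>0))\<^sup>2 \<partial>P) \<le> \<beta>"
    and fm: "f \<in> borel_measurable S" and fb: "\<And>x. x \<in> space S \<Longrightarrow> \<bar>f x\<bar> \<le> 1"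
  shows "(\<integral>x. (emp_mean m f x - (\<integral>y. f y \<partial>gibbs l (W (Suc t)) \<rho>0))\<^sup>2 \<partial>(P \<bind> smc_step S m l W K t))
     \<le> 4 * (exp ((W (Suc t) - W t) * C))\<^sup>2 * \<beta> + 2 / m"
proof -
  let ?MS = "PiM {..<m} (\<lambda>_. S)"
  let ?\<rho>a = "gibbs l (W t) \<rho>0" and ?\<rho>b = "gibbs l (W (Suc t)) \<rho>0"
  have spS: "space \<rho>0 = space S" by (rule sets_eq_imp_space_eq[OF sets_eq])
  have lm0: "l \<in> borel_measurable \<rho>0" by (subst measurable_cong_sets[OF sets_eq refl]) (rule lS)
  have lb0: "\<And>x. x \<in> space \<rho>0 \<Longrightarrow> 0 \<le> l x \<and> l x \<le> C" unfolding spS by (rule lbS)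
  interpret gb \<rho>0 l C by (rule gb.intro[OF pr lm0 lb0])
  define e where "e = exp ((W (Suc t) - W t) * C)"
  define w where "w y = exp (- (W (Suc t) - W t) * l y)" for y
  define Kf where "Kf y = (\<integral>z. f z \<partial>K (Suc t) y)" for y
  define c where "c = (\<integral>y. f y \<partial>?\<rho>b)"
  define B1 where "B1 = (\<integral>y. w y * Kf y \<partial>?\<rho>a)"
  define B0 where "B0 = (\<integral>y. w y \<partial>?\<rho>a)"
  define A1 where "A1 x = emp_mean m (\<lambda>y. w y * Kf y) x" for x
  define A0 where "A0 x = emp_mean m w x" for x
  have dpos: "0 < W (Suc t) - W t" using Wlt by simp
  have e0: "0 < e" unfolding e_def by simp
  have wm: "w \<in> borel_measurable S" unfolding w_def using lS by measurable
  have wb: "exp (- (W (Suc t) - W t) * C) \<le> w y \<and> w y \<le> 1" if "y \<in> space S" for y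
  proof -
    have "(W (Suc t) - W t) * l y \<le> (W (Suc t) - W t) * C" using lbS[OF that] dpos by (intro mult_left_mono) auto
    then have "- (W (Suc t) - W t) * C \<le> - (W (Suc t) - W t) * l y" unfolding mult_minus_left by linarith
    moreover have "0 \<le> (W (Suc t) - W t) * l y" using lbS[OF that] dpos by simp
    then have "- (W (Suc t) - W t) * l y \<le> 0" unfolding mult_minus_left by linarith
    ultimately show ?thesis unfolding w_def by simp
  qed
  have ew: "e * exp (- (W (Suc t) - W t) * C) = 1" unfolding e_def mult_minus_left exp_minus by simp
  have Kfm: "Kf \<in> borel_measurable S"
    unfolding Kf_def by (rule measurable_compose[OF Km integral_measurable_subprob_algebra[OF fm]])
  have Kfb: "\<bar>Kf y\<bar> \<le> 1" if "y \<in> space S" for y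
    unfolding Kf_def
  proof (rule prob_abs_int[OF Kp[OF that]])
    show "f \<in> borel_measurable (K (Suc t) y)"
      by (subst measurable_cong_sets[OF sets_kernel[OF Km that] refl]) (rule fm)
    fix z assume "z \<in> space (K (Suc t) y)"
    then show "\<bar>f z\<bar> \<le> 1" using fb sets_eq_imp_space_eq[OF sets_kernel[OF Km that]] by auto
  qed
  have Wb0: "0 \<le> W (Suc t)" using Wa Wlt by simp
  have pa: "prob_space ?\<rho>a" by (rule gibbs_prob[OF Wa])
  have pb: "prob_space ?\<rho>b" by (rule gibbs_prob[OF Wb0])
  have sa: "sets ?\<rho>a = sets S" using sets_eq by simp
  have sb: "sets ?\<rho>b = sets S" using sets_eq by simp
  have spa: "space ?\<rho>a = space S" using spS by simp
  have spb: "space ?\<rho>b = space S" using spS by simp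
  have Kmb: "K (Suc t) \<in> ?\<rho>b \<rightarrow>\<^sub>M subprob_algebra S"
    by (subst measurable_cong_sets[OF sb refl]) (rule Km)
  have c1: "c = (\<integral>y. Kf y \<partial>?\<rho>b)"
  proof -
    have "c = (\<integral>y. f y \<partial>(?\<rho>b \<bind> K (Suc t)))" unfolding c_def Kinv ..
    also have "\<dots> = (\<integral>y. Kf y \<partial>?\<rho>b)" unfolding Kf_def
    proof (rule integral_bind[OF fm fb Kmb, where B'=1])
      show "finite_measure ?\<rho>b" by (rule prob_space.finite_measure[OF pb])
      show "AE x in ?\<rho>b. emeasure (K (Suc t) x) (space (K (Suc t) x)) \<le> ennreal 1"
        by (rule AE_I2) (simp add: subprob_space.emeasure_space_le_1[OF subprob_space_kernel[OF Kmb]])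
    qed
    finally show ?thesis .
  qed
  have Kfm0: "Kf \<in> borel_measurable \<rho>0" by (subst measurable_cong_sets[OF sets_eq refl]) (rule Kfm)
  have c2: "c = B1 / B0"
    unfolding c1 B1_def B0_def w_def
    by (rule gibbs_step[OF Wa less_imp_le[OF Wlt] Kfm0]) (use Kfb spS in auto)
  have wma: "w \<in> borel_measurable ?\<rho>a" by (subst measurable_cong_sets[OF sa refl]) (rule wm)
  have wKma: "(\<lambda>y. w y * Kf y) \<in> borel_measurable ?\<rho>a"
    by (subst measurable_cong_sets[OF sa refl]) (use wm Kfm in measurable)
  have finA: "finite_measure ?\<rho>a" by (rule prob_space.finite_measure[OF pa])
  have wpos: "0 < w y" for y unfolding w_def by simp
  have wab: "\<bar>w y\<bar> \<le> 1" if "y \<in> space S" for y using wb[OF that] wpos[of y] by simp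
  have iw: "integrable ?\<rho>a w" by (rule fin_int[OF finA wma, where B=1]) (simp add: spa spS wab)
  have wKb: "\<bar>w y * Kf y\<bar> \<le> w y" if "y \<in> space S" for y
  proof -
    have "\<bar>w y * Kf y\<bar> = w y * \<bar>Kf y\<bar>" using wpos[of y] by (simp add: abs_mult)
    also have "\<dots> \<le> w y * 1" using wpos[of y] Kfb[OF that] by (intro mult_left_mono) auto
    finally show ?thesis by simp
  qed
  have iwK: "integrable ?\<rho>a (\<lambda>y. w y * Kf y)"
    by (rule fin_int[OF finA wKma, where B=1]) (use wab wKb spa in force)
  have B0l: "exp (- (W (Suc t) - W t) * C) \<le> B0"
  proof -
    have "(\<integral>y. exp (- (W (Suc t) - W t) * C) \<partial>?\<rho>a) \<le> B0" unfolding B0_def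
      by (rule integral_mono[OF finite_measure.integrable_const[OF finA] iw]) (use wb spa in force)
    then show ?thesis using prob_space.prob_space[OF pa] by simp
  qed
  have B0u: "B0 \<le> 1"
  proof -
    have "B0 \<le> (\<integral>y. 1 \<partial>?\<rho>a)" unfolding B0_def
      by (rule integral_mono[OF iw finite_measure.integrable_const[OF finA]]) (use wb spa in force)
    then show ?thesis using prob_space.prob_space[OF pa] by simp
  qed
  have B0p: "0 < B0" using B0l by (meson exp_gt_zero less_le_trans)
  have B1b: "\<bar>B1\<bar> \<le> B0"
  proof -
    have "B1 \<le> B0" unfolding B1_def B0_def
      by (rule integral_mono[OF iwK iw]) (use wKb spa in force)
    moreover have "- B1 \<le> B0" unfolding B1_def B0_def integral_minus[symmetric]
      by (rule integral_mono[OF _ iw]) (use wKb spa iwK in force)+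
    ultimately show ?thesis by linarith
  qed
  have point: "(\<integral>y. (emp_mean m f y - c)\<^sup>2 \<partial>smc_step S m l W K t x)
      \<le> 2 * e\<^sup>2 * ((A1 x - B1)\<^sup>2 + (A0 x - B0)\<^sup>2) + 2 / m" if x: "x \<in> space ?MS" for x
  proof -
    have xS: "x j \<in> space S" if "j < m" for j using x that by (auto simp: space_PiM)
    define T where "T = (\<Sum>k<m. w (x k))"
    have Tl: "real m * exp (- (W (Suc t) - W t) * C) \<le> T"
    proof -
      have "(\<Sum>k<m. exp (- (W (Suc t) - W t) * C)) \<le> T" unfolding T_def
        by (rule sum_mono) (use wb xS in auto)
      then show ?thesis by simp
    qed
    have Tp: "0 < T" using Tl m by (smt (verit) exp_gt_zero mult_pos_pos of_nat_0_less_iff)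
    have sw: "smc_weight m l W t x j = w (x j) / T" for j
      unfolding smc_weight_def T_def w_def ..
    have ratio: "(\<Sum>j<m. smc_weight m l W t x j * (\<integral>z. f z \<partial>K (Suc t) (x j))) = A1 x / A0 x"
    proof -
      have "(\<Sum>j<m. smc_weight m l W t x j * (\<integral>z. f z \<partial>K (Suc t) (x j))) = (\<Sum>j<m. w (x j) * Kf (x j)) / T"
        unfolding sw Kf_def sum_divide_distrib by (intro sum.cong) auto
      also have "\<dots> = A1 x / A0 x" unfolding A1_def A0_def emp_mean_def T_def using m by simp
      finally show ?thesis .
    qed
    have A0x: "1 \<le> e * A0 x"
    proof -
      have "exp (- (W (Suc t) - W t) * C) \<le> A0 x"
        unfolding A0_def emp_mean_def T_def[symmetric] using Tl m by (simp add: le_divide_eq mult.commute)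
      then have "e * exp (- (W (Suc t) - W t) * C) \<le> e * A0 x" using e0 by (intro mult_left_mono) auto
      then show ?thesis using ew by simp
    qed
    have "(\<integral>y. (emp_mean m f y - c)\<^sup>2 \<partial>smc_step S m l W K t x)
        \<le> ((\<Sum>j<m. smc_weight m l W t x j * (\<integral>z. f z \<partial>K (Suc t) (x j))) - c)\<^sup>2 + 2 / m"
      by (rule inner_bound[where K=K and t=t, OF m lS Km Kp fm fb x])
    also have "\<dots> = (A1 x / A0 x - B1 / B0)\<^sup>2 + 2 / m" unfolding ratio c2 ..
    also have "\<dots> \<le> 2 * e\<^sup>2 * ((A1 x - B1)\<^sup>2 + (A0 x - B0)\<^sup>2) + 2 / m"
      using ratio_ineq[OF e0 A0x B0p B1b] by simp
    finally show ?thesis .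
  qed
  have stepP: "smc_step S m l W K t \<in> P \<rightarrow>\<^sub>M subprob_algebra ?MS"
    by (subst measurable_cong_sets[OF Ps refl]) (rule step_meas[where K=K and t=t and W=W, OF lS m Km Kp])
  have hm: "(\<lambda>y. (emp_mean m f y - c)\<^sup>2) \<in> borel_measurable ?MS"
    by (intro borel_measurable_power borel_measurable_diff emp_meas[OF fm] measurable_const) simp
  have empb: "\<bar>emp_mean m g y\<bar> \<le> 1" if "y \<in> space ?MS" "\<And>z. z \<in> space S \<Longrightarrow> \<bar>g z\<bar> \<le> 1" for g y
    using m by (intro emp_bound) (use that in \<open>auto simp: space_PiM\<close>)
  have hb: "\<bar>(emp_mean m f y - c)\<^sup>2\<bar> \<le> (1 + \<bar>c\<bar>)\<^sup>2" if "y \<in> space ?MS" for y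
  proof -
    have "\<bar>emp_mean m f y - c\<bar> \<le> \<bar>1 + \<bar>c\<bar>\<bar>" using empb[where g=f, OF that fb] by linarith
    then show ?thesis by (simp only: abs_le_square_iff abs_power2)
  qed
  have finP: "finite_measure P" by (rule prob_space.finite_measure[OF Pp])
  have spP: "space P = space ?MS" by (rule sets_eq_imp_space_eq[OF Ps])
  have wKm: "(\<lambda>y. w y * Kf y) \<in> borel_measurable S" using wm Kfm by measurable
  have wKb1: "\<bar>w y * Kf y\<bar> \<le> 1" if "y \<in> space S" for y using wKb[OF that] wb[OF that] by linarith
  have A1m: "(\<lambda>x. (A1 x - B1)\<^sup>2) \<in> borel_measurable P" unfolding A1_def
    by (subst measurable_cong_sets[OF Ps refl]) (intro borel_measurable_power borel_measurable_diff emp_meas[OF wKm] measurable_const, simp)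
  have A0m: "(\<lambda>x. (A0 x - B0)\<^sup>2) \<in> borel_measurable P" unfolding A0_def
    by (subst measurable_cong_sets[OF Ps refl]) (intro borel_measurable_power borel_measurable_diff emp_meas[OF wm] measurable_const, simp)
  have B1u: "\<bar>B1\<bar> \<le> 1" using B1b B0u by linarith
  have B0a: "\<bar>B0\<bar> \<le> 1" using B0u B0p by linarith
  have A1b: "\<bar>(A1 x - B1)\<^sup>2\<bar> \<le> 4" if "x \<in> space P" for x
    unfolding A1_def by (rule sq_le4[OF empb[where g="\<lambda>y. w y * Kf y", OF that[unfolded spP] wKb1] B1u])
  have A0b: "\<bar>(A0 x - B0)\<^sup>2\<bar> \<le> 4" if "x \<in> space P" for x
    unfolding A0_def by (rule sq_le4[OF empb[where g=w, OF that[unfolded spP] wab] B0a])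
  have iA1: "integrable P (\<lambda>x. (A1 x - B1)\<^sup>2)" by (rule fin_int[OF finP A1m A1b])
  have iA0: "integrable P (\<lambda>x. (A0 x - B0)\<^sup>2)" by (rule fin_int[OF finP A0m A0b])
  have IH1: "(\<integral>x. (A1 x - B1)\<^sup>2 \<partial>P) \<le> \<beta>" unfolding A1_def B1_def by (rule IH[OF wKm wKb1])
  have IH0: "(\<integral>x. (A0 x - B0)\<^sup>2 \<partial>P) \<le> \<beta>" unfolding A0_def B0_def by (rule IH[OF wm wab])
  have "(\<integral>x. (emp_mean m f x - c)\<^sup>2 \<partial>(P \<bind> smc_step S m l W K t))
      = (\<integral>x. (\<integral>y. (emp_mean m f y - c)\<^sup>2 \<partial>smc_step S m l W K t x) \<partial>P)"
  proof (rule integral_bind[OF hm hb stepP finP, where B'=1])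
    show "AE x in P. emeasure (smc_step S m l W K t x) (space (smc_step S m l W K t x)) \<le> ennreal 1"
      by (rule AE_I2) (simp add: subprob_space.emeasure_space_le_1[OF subprob_space_kernel[OF stepP]])
  qed
  also have "\<dots> \<le> (\<integral>x. 2 * e\<^sup>2 * ((A1 x - B1)\<^sup>2 + (A0 x - B0)\<^sup>2) + 2 / m \<partial>P)"
  proof (rule integral_mono_AE')
    show "integrable P (\<lambda>x. 2 * e\<^sup>2 * ((A1 x - B1)\<^sup>2 + (A0 x - B0)\<^sup>2) + 2 / m)"
      by (intro Bochner_Integration.integrable_add integrable_mult_right iA1 iA0 finite_measure.integrable_const[OF finP])
    show "AE x in P. (\<integral>y. (emp_mean m f y - c)\<^sup>2 \<partial>smc_step S m l W K t x)
        \<le> 2 * e\<^sup>2 * ((A1 x - B1)\<^sup>2 + (A0 x - B0)\<^sup>2) + 2 / m"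
      by (rule AE_I2) (rule point, simp add: spP)
    show "AE x in P. 0 \<le> 2 * e\<^sup>2 * ((A1 x - B1)\<^sup>2 + (A0 x - B0)\<^sup>2) + 2 / m"
      by (rule AE_I2) simp
  qed
  also have "\<dots> = 2 * e\<^sup>2 * ((\<integral>x. (A1 x - B1)\<^sup>2 \<partial>P) + (\<integral>x. (A0 x - B0)\<^sup>2 \<partial>P)) + 2 / m"
    apply (subst Bochner_Integration.integral_add)
      apply (intro Bochner_Integration.integrable_add integrable_mult_right iA1 iA0 finite_measure.integrable_const[OF finP])+
    apply (subst integral_mult_right_zero)
    apply (subst Bochner_Integration.integral_add[OF iA1 iA0])
    apply (simp add: prob_space.prob_space[OF Pp])
    done
  also have "\<dots> \<le> 2 * e\<^sup>2 * (\<beta> + \<beta>) + 2 / m"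
    using IH1 IH0 by (intro add_right_mono mult_left_mono add_mono) auto
  also have "\<dots> = 4 * e\<^sup>2 * \<beta> + 2 / m" by simp
  finally show ?thesis unfolding c_def e_def .
qed


lemma step_prob:
  fixes m :: nat
  assumes m: "0 < m" and l: "l \<in> borel_measurable S"
    and Km: "K (Suc t) \<in> S \<rightarrow>\<^sub>M subprob_algebra S"
    and Kp: "\<And>x. x \<in> space S \<Longrightarrow> prob_space (K (Suc t) x)"
    and x: "x \<in> space (PiM {..<m} (\<lambda>_. S))"
  shows "prob_space (smc_step S m l W K t x)"
proof -
  let ?MJ = "PiM {..<m} (\<lambda>_. count_space {..<m})"
  let ?Q = "PiM {..<m} (\<lambda>_. point_measure {..<m} (\<lambda>j. ennreal (smc_weight m l W t x j)))"
  let ?G = "\<lambda>J. PiM {..<m} (\<lambda>i. K (Suc t) (x (J i)))"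
  have xS: "x j \<in> space S" if "j < m" for j using x that by (auto simp: space_PiM)
  have Qp: "prob_space ?Q" by (rule prob_space_PiM) (use weight_prob[OF m] in auto)
  have Qs: "sets ?Q = sets ?MJ" by (rule sets_PiM_cong) (auto simp: sets_point_measure)
  have Gm: "?G \<in> ?Q \<rightarrow>\<^sub>M subprob_algebra (PiM {..<m} (\<lambda>_. S))"
    using Gx_meas[where K=K and t=t, OF Km Kp x] by (subst measurable_cong_sets[OF Qs refl])
  have Jsp: "J i < m" if "J \<in> space ?Q" "i < m" for J i
  proof -
    have "J i \<in> space (point_measure {..<m} (\<lambda>j. ennreal (smc_weight m l W t x j)))"
      using that unfolding space_PiM by (rule PiE_mem[OF _ lessThan_iff[THEN iffD2]])
    then show ?thesis by (simp add: space_point_measure)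
  qed
  show ?thesis unfolding smc_step_def
  proof (rule prob_space.prob_space_bind[OF Qp _ Gm])
    show "AE J in ?Q. prob_space (?G J)"
    proof (rule AE_I2)
      fix J assume J: "J \<in> space ?Q"
      show "prob_space (?G J)" by (rule prob_space_PiM) (use Kp xS Jsp[OF J] in auto)
    qed
  qed
qed

lemma arith_step:
  fixes e B \<beta> :: real and m :: nat
  assumes e: "1 \<le> e" and B: "1 \<le> B" and m: "0 < m" and \<beta>: "\<beta> \<le> B\<^sup>2 / m"
  shows "4 * e\<^sup>2 * \<beta> + 2 / m \<le> (1 + 6 * e * B)\<^sup>2 / m"
proof -
  have h1: "4 * e\<^sup>2 * \<beta> \<le> 4 * e\<^sup>2 * (B\<^sup>2 / m)" using \<beta> by (intro mult_left_mono) auto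
  have h0: "4 * e\<^sup>2 * B\<^sup>2 + 2 \<le> (1 + 6 * e * B)\<^sup>2"
  proof -
    have eB: "1 \<le> e * B" using e B by (metis mult_mono' order_trans zero_le_one mult_1)
    then have "1 \<le> (e * B)\<^sup>2" by (simp add: one_le_power)
    moreover have "(1 + 6 * e * B)\<^sup>2 = 1 + 12 * (e * B) + 36 * (e * B)\<^sup>2" by (simp add: power2_eq_square algebra_simps)
    moreover have "4 * e\<^sup>2 * B\<^sup>2 = 4 * (e * B)\<^sup>2" by (simp add: power_mult_distrib)
    ultimately show ?thesis using eB by linarith
  qed
  have h2: "(4 * e\<^sup>2 * B\<^sup>2 + 2) / m \<le> (1 + 6 * e * B)\<^sup>2 / m"
    using h0 m by (intro divide_right_mono) auto
  have h3: "(4 * e\<^sup>2 * B\<^sup>2 + 2) / m = 4 * e\<^sup>2 * (B\<^sup>2 / m) + 2 / m" by (simp add: add_divide_distrib)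
  show ?thesis using h1 h2 h3 by linarith
qed

theorem mainTheorem8:
  fixes \<Xi> :: "(real ^ 'M) set"
    and \<rho>0 :: "(real ^ 'M) measure"
    and l :: "real ^ 'M \<Rightarrow> real"
    and Cl :: real
    and Wfin :: real
    and W :: "nat \<Rightarrow> real"
    and N m :: nat
    and K :: "nat \<Rightarrow> real ^ 'M \<Rightarrow> (real ^ 'M) measure"
  defines "S \<equiv> restrict_space borel \<Xi>"
  defines "\<rho> \<equiv> (\<lambda>t. gibbs l (W t) \<rho>0)"
  assumes prior: "prob_space \<rho>0" and prior_sets: "sets \<rho>0 = sets S"
    and l_meas: "l \<in> borel_measurable S"
    and l_bounds: "\<And>\<xi>. \<xi> \<in> \<Xi> \<Longrightarrow> 0 \<le> l \<xi> \<and> l \<xi> \<le> Cl"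
    and Wpos: "Wfin > 0"
    and W0: "W 0 = 0" and WN: "W N = Wfin"
    and Wmono: "\<And>t. t < N \<Longrightarrow> W t < W (Suc t)"
    and K_meas: "\<And>t. t < N \<Longrightarrow> K (Suc t) \<in> S \<rightarrow>\<^sub>M subprob_algebra S"
    and K_prob: "\<And>t x. t < N \<Longrightarrow> x \<in> space S \<Longrightarrow> prob_space (K (Suc t) x)"
    and K_inv: "\<And>t. t < N \<Longrightarrow> \<rho> (Suc t) \<bind> K (Suc t) = \<rho> (Suc t)"
    and m_pos: "m > 0"
  shows "(\<forall>t < N. smc_h S m (smc_law S m l W K \<rho>0 (Suc t)) (\<rho> (Suc t))
            \<le> 1 / sqrt (real m) * (\<Sum>s = 0..Suc t. 6 ^ (Suc t - s) * exp ((W (Suc t) - W s) * Cl)))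
       \<and> smc_h S m (smc_law S m l W K \<rho>0 N) (\<rho> N)
            \<le> 1 / sqrt (real m) * (\<Sum>s = 0..N. 6 ^ (N - s) * exp ((Wfin - W s) * Cl))"
proof -
  let ?MS = "PiM {..<m} (\<lambda>_. S)"
  define P where "P t = smc_law S m l W K \<rho>0 t" for t
  define Bd where "Bd t = (\<Sum>s = 0..t. 6 ^ (t - s) * exp ((W t - W s) * Cl))" for t
  have spS: "space S = \<Xi>" unfolding S_def by (simp add: space_restrict_space)
  have sp0: "space \<rho>0 = space S" by (rule sets_eq_imp_space_eq[OF prior_sets])
  have lbS: "\<And>x. x \<in> space S \<Longrightarrow> 0 \<le> l x \<and> l x \<le> Cl" using l_bounds spS by auto
  have Xne: "space S \<noteq> {}" using prob_space.not_empty[OF prior] sp0 by simp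
  have Cl0: "0 \<le> Cl" using Xne lbS by fastforce
  have lm0: "l \<in> borel_measurable \<rho>0" by (subst measurable_cong_sets[OF prior_sets refl]) (rule l_meas)
  have lb0: "\<And>x. x \<in> space \<rho>0 \<Longrightarrow> 0 \<le> l x \<and> l x \<le> Cl" unfolding sp0 by (rule lbS)
  interpret gb \<rho>0 l Cl by (rule gb.intro[OF prior lm0 lb0])
  have Wnn: "0 \<le> W t" if "t \<le> N" for t
    using that
  proof (induction t)
    case 0 then show ?case using W0 by simp
  next
    case (Suc t) then show ?case using Wmono[of t] by simp
  qed
  have Bd0: "Bd 0 = 1" unfolding Bd_def by simp
  have BdS: "Bd (Suc t) = 1 + 6 * exp ((W (Suc t) - W t) * Cl) * Bd t" for t
  proof -
    have "Bd (Suc t) = (\<Sum>s = 0..t. 6 ^ (Suc t - s) * exp ((W (Suc t) - W s) * Cl)) + 1"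
      unfolding Bd_def by (subst sum.atLeast0_atMost_Suc) simp
    also have "(\<Sum>s = 0..t. 6 ^ (Suc t - s) * exp ((W (Suc t) - W s) * Cl))
        = 6 * exp ((W (Suc t) - W t) * Cl) * Bd t"
      unfolding Bd_def sum_distrib_left
    proof (rule sum.cong[OF refl])
      fix s assume "s \<in> {0..t}"
      then have "Suc t - s = Suc (t - s)" by auto
      moreover have "exp ((W (Suc t) - W s) * Cl) = exp ((W (Suc t) - W t) * Cl) * exp ((W t - W s) * Cl)"
        by (simp add: exp_add[symmetric] algebra_simps)
      ultimately show "6 ^ (Suc t - s) * exp ((W (Suc t) - W s) * Cl)
          = 6 * exp ((W (Suc t) - W t) * Cl) * (6 ^ (t - s) * exp ((W t - W s) * Cl))"
        by simp
    qed
    finally show ?thesis by simp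
  qed
  have Bd1: "1 \<le> Bd t" for t
  proof (cases t)
    case 0 then show ?thesis using Bd0 by simp
  next
    case (Suc s)
    have "0 \<le> Bd s" unfolding Bd_def by (intro sum_nonneg) auto
    then have "0 \<le> 6 * exp ((W (Suc s) - W s) * Cl) * Bd s" by simp
    then show ?thesis using Suc BdS by simp
  qed
  have main: "sets (P t) = sets ?MS \<and> prob_space (P t) \<and>
     (\<forall>f. f \<in> borel_measurable S \<longrightarrow> (\<forall>x\<in>space S. \<bar>f x\<bar> \<le> 1) \<longrightarrow>
        (\<integral>x. (emp_mean m f x - (\<integral>y. f y \<partial>\<rho> t))\<^sup>2 \<partial>P t) \<le> (Bd t)\<^sup>2 / m)" if "t \<le> N" for t
    using that
  proof (induction t)
    case 0
    have P0: "P 0 = PiM {..<m} (\<lambda>_. \<rho>0)" unfolding P_def by simp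
    have "sets (P 0) = sets ?MS" unfolding P0 by (rule sets_PiM_cong) (auto simp: prior_sets)
    moreover have "prob_space (P 0)" unfolding P0 by (rule prob_space_PiM) (use prior in auto)
    moreover have "(\<integral>x. (emp_mean m f x - (\<integral>y. f y \<partial>\<rho> 0))\<^sup>2 \<partial>P 0) \<le> (Bd 0)\<^sup>2 / m"
      if fm: "f \<in> borel_measurable S" and fb: "\<forall>x\<in>space S. \<bar>f x\<bar> \<le> 1" for f
    proof -
      have fm0: "f \<in> borel_measurable \<rho>0" by (subst measurable_cong_sets[OF prior_sets refl]) (rule fm)
      have Z0: "Z 0 = 1" unfolding Z_def using prob_space.prob_space[OF prior] by simp
      have c0: "(\<integral>y. f y \<partial>\<rho> 0) = (\<integral>y. f y \<partial>\<rho>0)"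
        unfolding \<rho>_def W0 using gibbs_int[of 0 f, OF _ fm0] Z0 by simp
      have "(\<integral>x. (emp_mean m f x - (\<integral>y. f y \<partial>\<rho> 0))\<^sup>2 \<partial>P 0)
          \<le> ((\<Sum>i<m. \<integral>z. f z \<partial>\<rho>0) / m - (\<integral>y. f y \<partial>\<rho> 0))\<^sup>2 + 1 / m"
        unfolding P0 by (rule pim_var[OF m_pos]) (use prior fm0 fb sp0 in auto)
      also have "\<dots> = 1 / m" unfolding c0 using m_pos by simp
      finally show ?thesis using Bd0 by simp
    qed
    ultimately show ?case by blast
  next
    case (Suc t)
    then have tN: "t < N" by simp
    from Suc.IH[OF less_imp_le[OF tN]] have Ps: "sets (P t) = sets ?MS" and Pp: "prob_space (P t)"
      and IH: "\<And>f. f \<in> borel_measurable S \<Longrightarrow> (\<And>x. x \<in> space S \<Longrightarrow> \<bar>f x\<bar> \<le> 1) \<Longrightarrow>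
        (\<integral>x. (emp_mean m f x - (\<integral>y. f y \<partial>\<rho> t))\<^sup>2 \<partial>P t) \<le> (Bd t)\<^sup>2 / m"
      by auto
    have PS: "P (Suc t) = P t \<bind> smc_step S m l W K t" unfolding P_def by simp
    have stepP: "smc_step S m l W K t \<in> P t \<rightarrow>\<^sub>M subprob_algebra ?MS"
      by (subst measurable_cong_sets[OF Ps refl])
        (rule step_meas[where K=K and t=t and W=W, OF l_meas m_pos K_meas[OF tN] K_prob[OF tN]])
    have ne: "space (P t) \<noteq> {}" using prob_space.not_empty[OF Pp] .
    have "sets (P (Suc t)) = sets ?MS" unfolding PS by (rule sets_bind_measurable[OF stepP ne])
    moreover have "prob_space (P (Suc t))" unfolding PS
    proof (rule prob_space.prob_space_bind[OF Pp _ stepP])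
      show "AE x in P t. prob_space (smc_step S m l W K t x)"
      proof (rule AE_I2)
        fix x assume "x \<in> space (P t)"
        then have x: "x \<in> space ?MS" using sets_eq_imp_space_eq[OF Ps] by simp
        show "prob_space (smc_step S m l W K t x)"
          by (rule step_prob[where K=K and t=t, OF m_pos l_meas K_meas[OF tN] K_prob[OF tN] x])
      qed
    qed
    moreover have "(\<integral>x. (emp_mean m f x - (\<integral>y. f y \<partial>\<rho> (Suc t)))\<^sup>2 \<partial>P (Suc t)) \<le> (Bd (Suc t))\<^sup>2 / m"
      if fm: "f \<in> borel_measurable S" and fb: "\<forall>x\<in>space S. \<bar>f x\<bar> \<le> 1" for f
    proof -
      have Kinv': "gibbs l (W (Suc t)) \<rho>0 \<bind> K (Suc t) = gibbs l (W (Suc t)) \<rho>0"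
        using K_inv[OF tN] unfolding \<rho>_def .
      have "(\<integral>x. (emp_mean m f x - (\<integral>y. f y \<partial>\<rho> (Suc t)))\<^sup>2 \<partial>P (Suc t))
          \<le> 4 * (exp ((W (Suc t) - W t) * Cl))\<^sup>2 * ((Bd t)\<^sup>2 / m) + 2 / m"
        unfolding PS \<rho>_def
      proof (rule step_bound[where K=K and t=t and W=W, OF prior prior_sets l_meas lbS m_pos
            Wnn[OF less_imp_le[OF tN]] Wmono[OF tN] K_meas[OF tN] K_prob[OF tN] Kinv' Ps Pp])
        fix g :: "real ^ 'M \<Rightarrow> real" assume "g \<in> borel_measurable S" "\<And>x. x \<in> space S \<Longrightarrow> \<bar>g x\<bar> \<le> 1"
        then show "(\<integral>x. (emp_mean m g x - (\<integral>y. g y \<partial>gibbs l (W t) \<rho>0))\<^sup>2 \<partial>P t) \<le> (Bd t)\<^sup>2 / m"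
          using IH unfolding \<rho>_def by blast
      qed (use fm fb in auto)
      also have "\<dots> \<le> (1 + 6 * exp ((W (Suc t) - W t) * Cl) * Bd t)\<^sup>2 / m"
      proof (rule arith_step[OF _ Bd1 m_pos order_refl])
        show "1 \<le> exp ((W (Suc t) - W t) * Cl)" using Wmono[OF tN] Cl0 by simp
      qed
      finally show ?thesis unfolding BdS .
    qed
    ultimately show ?case by blast
  qed
  have hbound: "smc_h S m (P (Suc t)) (\<rho> (Suc t)) \<le> 1 / sqrt (real m) * Bd (Suc t)" if tN: "t < N" for t
  proof -
    have M: "\<forall>f. f \<in> borel_measurable S \<longrightarrow> (\<forall>x\<in>space S. \<bar>f x\<bar> \<le> 1) \<longrightarrow>
        (\<integral>x. (emp_mean m f x - (\<integral>y. f y \<partial>\<rho> (Suc t)))\<^sup>2 \<partial>P (Suc t)) \<le> (Bd (Suc t))\<^sup>2 / m"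
    proof -
      have "Suc t \<le> N" using tN by simp
      from main[OF this] show ?thesis by (elim conjE)
    qed
    show ?thesis unfolding smc_h_def
    proof (rule cSUP_least)
      show "{f :: real ^ 'M \<Rightarrow> real. f \<in> borel_measurable S \<and> (\<forall>x\<in>space S. \<bar>f x\<bar> \<le> 1)} \<noteq> {}"
      proof -
        have "(\<lambda>_. 0) \<in> {f \<in> borel_measurable S. \<forall>x\<in>space S. \<bar>f x\<bar> \<le> (1::real)}" by simp
        then show ?thesis by blast
      qed
      fix f :: "real ^ 'M \<Rightarrow> real" assume "f \<in> {f \<in> borel_measurable S. \<forall>x\<in>space S. \<bar>f x\<bar> \<le> 1}"
      then have "(\<integral>x. (emp_mean m f x - (\<integral>y. f y \<partial>\<rho> (Suc t)))\<^sup>2 \<partial>P (Suc t)) \<le> (Bd (Suc t))\<^sup>2 / m"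
        using M by blast
      then have "sqrt (\<integral>x. (emp_mean m f x - (\<integral>y. f y \<partial>\<rho> (Suc t)))\<^sup>2 \<partial>P (Suc t)) \<le> sqrt ((Bd (Suc t))\<^sup>2 / m)"
        by (rule real_sqrt_le_mono)
      also have "\<dots> = sqrt ((Bd (Suc t))\<^sup>2) / sqrt (real m)" by (rule real_sqrt_divide)
      also have "sqrt ((Bd (Suc t))\<^sup>2) = Bd (Suc t)" using Bd1[of "Suc t"] by (intro real_sqrt_unique) auto
      also have "Bd (Suc t) / sqrt (real m) = 1 / sqrt (real m) * Bd (Suc t)" by simp
      finally show "sqrt (\<integral>x. (emp_mean m f x - (\<integral>y. f y \<partial>\<rho> (Suc t)))\<^sup>2 \<partial>P (Suc t)) \<le> 1 / sqrt (real m) * Bd (Suc t)" .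
    qed
  qed
  have N0: "0 < N"
  proof (rule ccontr)
    assume "\<not> 0 < N" then have "N = 0" by simp
    then show False using W0 WN Wpos by simp
  qed
  then obtain N' where N': "N = Suc N'" using gr0_implies_Suc by blast
  show ?thesis
  proof
    show "\<forall>t<N. smc_h S m (smc_law S m l W K \<rho>0 (Suc t)) (\<rho> (Suc t))
        \<le> 1 / sqrt (real m) * (\<Sum>s = 0..Suc t. 6 ^ (Suc t - s) * exp ((W (Suc t) - W s) * Cl))"
      using hbound unfolding P_def Bd_def by blast
    have "smc_h S m (P (Suc N')) (\<rho> (Suc N')) \<le> 1 / sqrt (real m) * Bd (Suc N')"
      using hbound[of N'] N' by simp
    then show "smc_h S m (smc_law S m l W K \<rho>0 N) (\<rho> N)
        \<le> 1 / sqrt (real m) * (\<Sum>s = 0..N. 6 ^ (N - s) * exp ((Wfin - W s) * Cl))"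
      unfolding P_def Bd_def N'[symmetric] WN .
  qed
qed

end
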